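(* Let $x\in\mathbb{R}^n$ have positive entries with $\max_{i,j}x_i/x_j\le b$, and let $y\in\mathbb{R}^n$ be nonnegative and nonzero. Then $$D(x,y)\le\min\left(1+\sqrt n,\,1+\sqrt b\right)\sqrt2\,\sin(x,y).$$
   Context: $\sin(x,y)$ is the sine of the angle between $x$ and $y$, and $$D(x,y)=\frac{\left\|\frac{y}{\|y\|_1}-\frac{x}{\|x\|_1}\right\|_2}{\left\|\frac{y}{\|y\|_1}\right\|_2}.$$ *)

theory Defs
  imports "HOL-Analysis.Analysis"
begin

definition l1norm :: "real ^ 'n \<Rightarrow> real" where
  "l1norm x = (\<Sum>i\<in>UNIV. \<bar>x $ i\<bar>)"

definition vec_angle :: "real ^ 'n \<Rightarrow> real ^ 'n \<Rightarrow> real" where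
  "vec_angle x y = arccos ((x \<bullet> y) / (norm x * norm y))"

definition sin_angle :: "real ^ 'n \<Rightarrow> real ^ 'n \<Rightarrow> real" where
  "sin_angle x y = sin (vec_angle x y)"

definition Dist :: "real ^ 'n \<Rightarrow> real ^ 'n \<Rightarrow> real" where
  "Dist x y = norm ((1 / l1norm y) *\<^sub>R y - (1 / l1norm x) *\<^sub>R x) / norm ((1 / l1norm y) *\<^sub>R y)"

end

theory Submission
  imports Defs
begin

lemma l1_scale: "l1norm (c *\<^sub>R x) = \<bar>c\<bar> * l1norm x"
  by (simp add: l1norm_def abs_mult sum_distrib_left)

lemma l1_nonneg_sum: assumes "\<forall>i. x $ i \<ge> 0" shows "l1norm x = (\<Sum>i\<in>UNIV. x $ i)"
  using assms by (simp add: l1norm_def)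

lemma sumabs_sqrtn: "\<bar>\<Sum>i\<in>UNIV. (w::real^'n) $ i\<bar> \<le> sqrt (real CARD('n)) * norm w"
proof -
  have "(\<Sum>i\<in>UNIV. w $ i) = w \<bullet> (\<chi> i. 1)" by (simp add: inner_vec_def)
  moreover have "norm ((\<chi> i. 1)::real^'n) = sqrt (real CARD('n))"
    by (simp add: norm_vec_def L2_set_def)
  ultimately show ?thesis using Cauchy_Schwarz_ineq2[of w "\<chi> i. 1"] by (simp add: mult.commute)
qed

lemma sumabs_b:
  fixes X w :: "real^'n"
  assumes pos: "\<forall>i. X $ i > 0" and rat: "\<forall>i j. X $ i / X $ j \<le> b" and nX: "norm X = 1"
  shows "\<bar>\<Sum>i\<in>UNIV. w $ i\<bar> \<le> sqrt b * norm w * (\<Sum>i\<in>UNIV. X $ i)"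
proof -
  define S where "S = (\<Sum>i\<in>UNIV. X $ i)"
  have fin: "finite (range (\<lambda>i. X $ i))" by simp
  have "Min (range (\<lambda>i. X $ i)) \<in> range (\<lambda>i. X $ i)" using fin by (intro Min_in) auto
  then obtain j where jm: "Min (range (\<lambda>i. X $ i)) = X $ j" by (metis imageE)
  have j: "\<forall>i. X $ j \<le> X $ i" using fin jm by (metis Min_le rangeI)
  define m where "m = X $ j"
  have mpos: "m > 0" using pos m_def by auto
  have b1: "b \<ge> 1" using rat pos by (metis divide_self less_irrefl)
  have Spos: "S > 0" using pos unfolding S_def by (simp add: sum_pos)
  have sq1: "(\<Sum>i\<in>UNIV. (X $ i)^2) = 1"
    using nX by (simp add: norm_vec_def L2_set_def)
  have "X $ i \<le> b * m" for i using rat[rule_format, of i j] mpos m_def by (simp add: divide_le_eq)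
  hence "(\<Sum>i\<in>UNIV. (X $ i)^2) \<le> (\<Sum>i\<in>UNIV. X $ i * (b*m))"
    using pos by (intro sum_mono) (simp add: power2_eq_square mult_left_mono less_imp_le)
  moreover have "(\<Sum>i\<in>UNIV. X $ i * (b*m)) = b * m * S"
    unfolding S_def by (metis (no_types) sum_distrib_right mult.commute)
  ultimately have key: "1 \<le> b * m * S" using sq1 by linarith
  have cs: "(\<Sum>i\<in>UNIV. \<bar>w $ i\<bar>)^2 \<le> S * (\<Sum>i\<in>UNIV. (w $ i)^2 / X $ i)"
  proof -
    define p :: "real^'n" where "p = (\<chi> i. sqrt (X $ i))"
    define q :: "real^'n" where "q = (\<chi> i. \<bar>w $ i\<bar> / sqrt (X $ i))"
    have "p \<bullet> q = (\<Sum>i\<in>UNIV. \<bar>w $ i\<bar>)"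
      using pos by (auto simp add: p_def q_def inner_vec_def less_imp_le intro!: sum.cong) (metis less_irrefl)
    moreover have "p \<bullet> p = S" using pos by (simp add: p_def inner_vec_def S_def less_imp_le)
    moreover have "q \<bullet> q = (\<Sum>i\<in>UNIV. (w $ i)^2 / X $ i)"
      using pos by (auto simp add: q_def inner_vec_def less_imp_le power2_eq_square intro!: sum.cong)
    moreover have "(p \<bullet> q)^2 \<le> (p \<bullet> p) * (q \<bullet> q)"
      using Cauchy_Schwarz_ineq[of p q] by simp
    ultimately show ?thesis by simp
  qed
  have "(\<Sum>i\<in>UNIV. (w $ i)^2 / X $ i) \<le> (\<Sum>i\<in>UNIV. (w $ i)^2 / m)"
    using j pos mpos m_def by (intro sum_mono divide_left_mono) auto
  also have "\<dots> = (norm w)^2 / m" by (simp add: norm_vec_def L2_set_def sum_divide_distrib[symmetric] sum_nonneg)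
  finally have h2: "(\<Sum>i\<in>UNIV. (w $ i)^2 / X $ i) \<le> (norm w)^2 / m" .
  have "(\<Sum>i\<in>UNIV. \<bar>w $ i\<bar>)^2 \<le> S * ((norm w)^2 / m)"
    using cs h2 Spos by (meson mult_left_mono less_imp_le order_trans)
  also have "\<dots> \<le> S * ((norm w)^2 * (b * S))"
  proof -
    have "1 / m \<le> b * S" using key mpos by (simp add: divide_le_eq mult.commute mult.left_commute)
    hence "(norm w)^2 / m \<le> (norm w)^2 * (b * S)"
      by (metis mult_left_mono zero_le_power2 times_divide_eq_right mult.right_neutral)
    thus ?thesis by (rule mult_left_mono[OF _ less_imp_le[OF Spos]])
  qed
  also have "\<dots> = (sqrt b * norm w * S)^2"
  proof -
    have "(sqrt b)^2 = b" using b1 by simp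
    thus ?thesis by (simp only: power_mult_distrib) (simp add: algebra_simps power2_eq_square)
  qed
  finally have sq: "(\<Sum>i\<in>UNIV. \<bar>w $ i\<bar>)^2 \<le> (sqrt b * norm w * S)^2" .
  have "0 \<le> sqrt b * norm w * S" using b1 Spos by simp
  with sq have "(\<Sum>i\<in>UNIV. \<bar>w $ i\<bar>) \<le> sqrt b * norm w * S"
    by (rule power2_le_imp_le)
  moreover have "\<bar>\<Sum>i\<in>UNIV. w $ i\<bar> \<le> (\<Sum>i\<in>UNIV. \<bar>w $ i\<bar>)" by (rule sum_abs)
  ultimately show ?thesis unfolding S_def by linarith
qed


theorem lemmaA4:
  fixes x y :: "real ^ 'n" and b :: real
  assumes "\<forall>i. x $ i > 0"
    and "\<forall>i j. x $ i / x $ j \<le> b"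
    and "\<forall>i. y $ i \<ge> 0"
    and "y \<noteq> 0"
  shows "Dist x y \<le> min (1 + sqrt (real CARD('n))) (1 + sqrt b) * sqrt 2 * sin_angle x y"
proof -
  have xne: "x \<noteq> 0" using assms(1) by (metis less_irrefl zero_index)
  define nx where "nx = norm x"
  define ny where "ny = norm y"
  have nxp: "nx > 0" using xne nx_def by simp
  have nyp: "ny > 0" using assms(4) ny_def by simp
  define X where "X = (1/nx) *\<^sub>R x"
  define Y where "Y = (1/ny) *\<^sub>R y"
  have nX: "norm X = 1" using nxp by (simp add: X_def nx_def)
  have nY: "norm Y = 1" using nyp by (simp add: Y_def ny_def)
  have Xpos: "\<forall>i. X $ i > 0" using assms(1) nxp by (simp add: X_def)
  have Ynn: "\<forall>i. Y $ i \<ge> 0" using assms(3) nyp by (simp add: Y_def)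
  have Xrat: "\<forall>i j. X $ i / X $ j \<le> b" using assms(2) nxp by (simp add: X_def)
  define c where "c = X \<bullet> Y"
  have c0: "c \<ge> 0" unfolding c_def inner_vec_def using Xpos Ynn
    by (intro sum_nonneg) (simp add: less_imp_le)
  have c1: "c \<le> 1" using norm_cauchy_schwarz[of X Y] nX nY c_def by simp
  have cxy: "(x \<bullet> y) / (norm x * norm y) = c"
    using nxp nyp by (simp add: c_def X_def Y_def nx_def ny_def)
  have sin: "sin_angle x y = sqrt (1 - c^2)"
    unfolding sin_angle_def vec_angle_def cxy using c0 c1 by (simp add: sin_arccos)
  define E where "E = norm (Y - X)"
  have E2: "E^2 = 2 - 2 * c"
  proof -
    have xx: "X \<bullet> X = 1" "Y \<bullet> Y = 1" using nX nY by (simp_all add: dot_square_norm)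
    have "E^2 = (Y - X) \<bullet> (Y - X)" unfolding E_def by (rule power2_norm_eq_inner)
    also have "\<dots> = Y \<bullet> Y - 2 * (X \<bullet> Y) + X \<bullet> X"
      by (simp add: inner_diff_left inner_diff_right inner_commute)
    finally show ?thesis using xx c_def by simp
  qed
  have Ele: "E \<le> sqrt 2 * sin_angle x y"
  proof -
    have "E = sqrt (2 - 2*c)" using E2 E_def by (metis norm_ge_zero real_sqrt_unique)
    also have "\<dots> \<le> sqrt (2 * (1 - c^2))" using c0 c1
      by (intro real_sqrt_le_mono) (simp add: power2_eq_square mult_left_le)
    also have "\<dots> = sqrt 2 * sin_angle x y" unfolding sin by (rule real_sqrt_mult)
    finally show ?thesis .
  qed
  define lX where "lX = l1norm X"
  define lY where "lY = l1norm Y"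
  have lXs: "lX = (\<Sum>i\<in>UNIV. X $ i)" using Xpos lX_def l1_nonneg_sum less_imp_le by blast
  have lYs: "lY = (\<Sum>i\<in>UNIV. Y $ i)" using Ynn lY_def l1_nonneg_sum by blast
  have lX1: "lX \<ge> 1" using norm_le_l1_cart[of X] nX lX_def l1norm_def by metis
  have lY1: "lY \<ge> 1" using norm_le_l1_cart[of Y] nY lY_def l1norm_def by metis
  define k where "k = lY / lX"
  have xX: "x = nx *\<^sub>R X" using nxp by (simp add: X_def)
  have yY: "y = ny *\<^sub>R Y" using nyp by (simp add: Y_def)
  have lx: "l1norm x = nx * lX" using nxp by (simp add: xX l1_scale lX_def)
  have ly: "l1norm y = ny * lY" using nyp by (simp add: yY l1_scale lY_def)
  have D: "Dist x y = norm (Y - k *\<^sub>R X)"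
  proof -
    have a: "(1 / l1norm y) *\<^sub>R y = (1/lY) *\<^sub>R Y" unfolding ly by (subst yY) (use nyp in simp)
    have b: "(1 / l1norm x) *\<^sub>R x = (1/lX) *\<^sub>R X" unfolding lx by (subst xX) (use nxp in simp)
    have "Dist x y = norm ((1/lY) *\<^sub>R Y - (1/lX) *\<^sub>R X) / (1/lY)"
      unfolding Dist_def a b using nY lY1 by simp
    also have "\<dots> = norm (lY *\<^sub>R ((1/lY) *\<^sub>R Y - (1/lX) *\<^sub>R X))"
      using lY1 by (simp add: divide_inverse mult.commute)
    also have "lY *\<^sub>R ((1/lY) *\<^sub>R Y - (1/lX) *\<^sub>R X) = Y - k *\<^sub>R X"
      using lY1 by (simp add: k_def scaleR_diff_right)
    finally show ?thesis .
  qed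
  have gen: "Dist x y \<le> (1 + K) * E" if K: "\<bar>1 - k\<bar> \<le> K * E" for K
  proof -
    have eq: "Y - k *\<^sub>R X = (Y - X) + (1 - k) *\<^sub>R X" by (simp add: algebra_simps)
    have "norm (Y - k *\<^sub>R X) \<le> norm (Y - X) + norm ((1 - k) *\<^sub>R X)"
      unfolding eq by (rule norm_triangle_ineq)
    hence "norm (Y - k *\<^sub>R X) \<le> E + \<bar>1 - k\<bar>" using nX E_def by simp
    thus ?thesis using D K by (simp add: algebra_simps)
  qed
  have onek: "\<bar>1 - k\<bar> = \<bar>\<Sum>i\<in>UNIV. (X - Y) $ i\<bar> / lX"
  proof -
    have "1 - k = (lX - lY) / lX" using lX1 by (simp add: k_def field_simps)
    moreover have "lX - lY = (\<Sum>i\<in>UNIV. (X - Y) $ i)" by (simp add: lXs lYs sum_subtractf)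
    ultimately show ?thesis using lX1 by simp
  qed
  have nXY: "norm (X - Y) = E" by (simp add: E_def norm_minus_commute)
  have g1: "Dist x y \<le> (1 + sqrt (real CARD('n))) * E"
  proof (rule gen)
    have "\<bar>\<Sum>i\<in>UNIV. (X - Y) $ i\<bar> \<le> sqrt (real CARD('n)) * E"
      using sumabs_sqrtn[of "X - Y"] nXY by simp
    also have "\<dots> \<le> sqrt (real CARD('n)) * E * lX" using lX1 E_def mult_left_mono[of 1 lX "sqrt (real CARD('n)) * E"]
      by simp
    finally show "\<bar>1 - k\<bar> \<le> sqrt (real CARD('n)) * E" unfolding onek using lX1
      by (simp add: divide_le_eq)
  qed
  have g2: "Dist x y \<le> (1 + sqrt b) * E"
  proof (rule gen)
    have "\<bar>\<Sum>i\<in>UNIV. (X - Y) $ i\<bar> \<le> sqrt b * E * lX"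
      using sumabs_b[OF Xpos Xrat nX, of "X - Y"] nXY lXs by simp
    thus "\<bar>1 - k\<bar> \<le> sqrt b * E" unfolding onek using lX1
      by (simp add: divide_le_eq)
  qed
  have b1: "b \<ge> 1" using Xrat Xpos by (metis divide_self less_irrefl)
  have s0: "0 \<le> sqrt 2 * sin_angle x y" using Ele E_def by (meson norm_ge_zero order_trans)
  have h1: "Dist x y \<le> (1 + sqrt (real CARD('n))) * sqrt 2 * sin_angle x y"
    using g1 Ele by (metis (no_types) mult.assoc mult_left_mono order_trans real_sqrt_ge_zero add_nonneg_nonneg zero_le_one of_nat_0_le_iff)
  have h2: "Dist x y \<le> (1 + sqrt b) * sqrt 2 * sin_angle x y"
    using g2 Ele b1 by (metis (no_types) mult.assoc mult_left_mono order_trans real_sqrt_ge_zero add_nonneg_nonneg zero_le_one order.trans)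
  show ?thesis using h1 h2 by (simp add: min_def)
qed

end
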